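(* For $L>0$, let $\mathcal{L}_L$ be the set of graphs $g=(V,E)\in\mathcal{G}$ such that whenever $x,y\in V$ with $0<|x-y|\le L$, we have $\{x,y\}\in E$. For any $L>0$, $\gamma>1$, $p\in[1,\infty)$ and $b>p+1$, $$\mathbb{P}^{b,p}_{N,\gamma}(G_N\in\mathcal{L}_L)\xrightarrow{N\to\infty}1.$$ In particular, for such $\gamma,p,b$, the random rooted graph $(G_N,\mathcal{O}_N)$ sampled from $\mathbb{P}^{b,p}_{N,\gamma}\otimes\mathcal{U}_N$ does not converge in distribution (to any random rooted graph in $\mathcal{G}$), where $\mathcal{U}_N$ is the uniform measure on $\{1,\dots,N\}$.
   Context: $\mathcal{G}$ is the set of locally finite graphs $g=(V,E)$ with $V\subset\mathbb{Z}$; $d_g(x,y)$ denotes graph distance in $g$. For a finite $g=(V,E)\in\mathcal{G}$ with $N=|V|$ and $p\in[1,\infty)$, $\mathcal{H}_p(g)=\big(\binom{N}{2}^{-1}\sum_{x,y\in V,\,x<y}d_g(x,y)^p\big)^{1/p}$. For $N\ge1$, $\gamma>0$, $\mathbb{P}_{N,\gamma}$ is the law of the random graph $G_N$ on vertex set $[N]=\{1,\dots,N\}$ containing every edge $\{x,y\}$ with $|x-y|=1$ and in which each pair $\{x,y\}$ with $|x-y|>1$ is an edge independently with probability $\exp\{-|x-y|^\gamma\}$. For $b\in\mathbb{R}$, $\mathbb{P}^{b,p}_{N,\gamma}(g)=\frac{1}{Z^{b,p}_{N,\gamma}}\exp\{-N^b\mathcal{H}_p(g)\}\mathbb{P}_{N,\gamma}(g)$,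 $Z^{b,p}_{N,\gamma}$ the normalizing constant. Rooted graphs, $\simeq$, balls and convergence in distribution: a rooted graph is $(g,o)$ with $g\in\mathcal{G}$, $o$ a vertex of $g$; $(g,o)\simeq(g',o')$ if the translation $x\mapsto x-o+o'$ maps $g$ exactly onto $g'$; $B_{(g,o)}(R)$ is the rooted induced subgraph on $\{x:d_g(o,x)\le R\}$; $(G_n,\mathcal{O}_n)\to(G,\mathcal{O})$ in distribution if for every $R$ and every rooted graph $(g,o)$, $P(B_{(G_n,\mathcal{O}_n)}(R)\simeq(g,o))\to P(B_{(G,\mathcal{O})}(R)\simeq(g,o))$. *)

theory Defs
  imports "HOL-Probability.Probability"
begin

type_synonym graph = "int set \<times> int set set"
type_synonym rgraph = "graph \<times> int"

definition verts :: "graph \<Rightarrow> int set" where "verts g = fst g"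
definition edges :: "graph \<Rightarrow> int set set" where "edges g = snd g"

definition in_G :: "graph \<Rightarrow> bool" where
  "in_G g \<longleftrightarrow>
     (\<forall>e\<in>edges g. \<exists>x y. x \<noteq> y \<and> x \<in> verts g \<and> y \<in> verts g \<and> e = {x, y}) \<and>
     (\<forall>x\<in>verts g. finite {y. {x, y} \<in> edges g})"

definition reach :: "graph \<Rightarrow> nat \<Rightarrow> int \<Rightarrow> int \<Rightarrow> bool" where
  "reach g n x y \<longleftrightarrow> x \<in> verts g \<and>
     (\<exists>ps :: int list. length ps = n + 1 \<and> hd ps = x \<and> last ps = y \<and>
        (\<forall>i<n. {ps ! i, ps ! (i + 1)} \<in> edges g))"

text \<open>Graph distance (used only for connected graphs).\<close>
definition gdist :: "graph \<Rightarrow> int \<Rightarrow> int \<Rightarrow> nat" where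
  "gdist g x y = (LEAST n. reach g n x y)"

definition Hp :: "real \<Rightarrow> graph \<Rightarrow> real" where
  "Hp p g = ((\<Sum>(x, y) \<in> {(x, y). x \<in> verts g \<and> y \<in> verts g \<and> x < y}.
                  real (gdist g x y) powr p) / real (card (verts g) choose 2)) powr (1 / p)"

definition rooted_in_G :: "rgraph \<Rightarrow> bool" where
  "rooted_in_G h \<longleftrightarrow> in_G (fst h) \<and> snd h \<in> verts (fst h)"

definition ball :: "rgraph \<Rightarrow> nat \<Rightarrow> rgraph" where
  "ball h R = (let g = fst h; r = snd h; B = {x. \<exists>n\<le>R. reach g n r x}
               in ((B, {e \<in> edges g. e \<subseteq> B}), r))"

definition rg_iso :: "rgraph \<Rightarrow> rgraph \<Rightarrow> bool" where
  "rg_iso h h' \<longleftrightarrow>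
     (let t = (\<lambda>x. x - snd h + snd h') in
        verts (fst h') = t ` verts (fst h) \<and> edges (fst h') = (\<lambda>e. t ` e) ` edges (fst h))"

definition pairsN :: "nat \<Rightarrow> (int \<times> int) set" where
  "pairsN N = {(x, y). 1 \<le> x \<and> x < y \<and> y \<le> int N}"

definition edge_prob :: "real \<Rightarrow> int \<Rightarrow> int \<Rightarrow> real" where
  "edge_prob \<gamma> x y = (if \<bar>x - y\<bar> = 1 then 1 else exp (- (real_of_int \<bar>x - y\<bar> powr \<gamma>)))"

definition edge_sets :: "nat \<Rightarrow> int set set set" where
  "edge_sets N = Pow {{x, y} | x y. (x, y) \<in> pairsN N}"

definition graph_of :: "nat \<Rightarrow> int set set \<Rightarrow> graph" where
  "graph_of N E = ({1..int N}, E)"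

definition PN :: "real \<Rightarrow> nat \<Rightarrow> int set set \<Rightarrow> real" where
  "PN \<gamma> N E = (\<Prod>(x, y) \<in> pairsN N.
      if {x, y} \<in> E then edge_prob \<gamma> x y else 1 - edge_prob \<gamma> x y)"

definition tweight :: "real \<Rightarrow> real \<Rightarrow> real \<Rightarrow> nat \<Rightarrow> int set set \<Rightarrow> real" where
  "tweight b p \<gamma> N E = exp (- (real N powr b) * Hp p (graph_of N E)) * PN \<gamma> N E"

definition Zc :: "real \<Rightarrow> real \<Rightarrow> real \<Rightarrow> nat \<Rightarrow> real" where
  "Zc b p \<gamma> N = (\<Sum>E\<in>edge_sets N. tweight b p \<gamma> N E)"

definition tilted_prob :: "real \<Rightarrow> real \<Rightarrow> real \<Rightarrow> nat \<Rightarrow> (graph \<Rightarrow> bool) \<Rightarrow> real" where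
  "tilted_prob b p \<gamma> N Q =
     (\<Sum>E\<in>{E \<in> edge_sets N. Q (graph_of N E)}. tweight b p \<gamma> N E) / Zc b p \<gamma> N"

definition rooted_tilted_prob :: "real \<Rightarrow> real \<Rightarrow> real \<Rightarrow> nat \<Rightarrow> (rgraph \<Rightarrow> bool) \<Rightarrow> real" where
  "rooted_tilted_prob b p \<gamma> N Q =
     (\<Sum>E\<in>edge_sets N. \<Sum>v\<in>{1..int N}.
        if Q (graph_of N E, v) then tweight b p \<gamma> N E / (Zc b p \<gamma> N * real N) else 0)"

definition LL :: "real \<Rightarrow> graph set" where
  "LL L = {g. in_G g \<and> (\<forall>x\<in>verts g. \<forall>y\<in>verts g.
              0 < \<bar>x - y\<bar> \<and> real_of_int \<bar>x - y\<bar> \<le> L \<longrightarrow> {x, y} \<in> edges g)}"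

definition random_rooted_graph :: "rgraph measure \<Rightarrow> bool" where
  "random_rooted_graph M \<longleftrightarrow> prob_space M \<and> space M \<subseteq> {h. rooted_in_G h} \<and>
     (\<forall>R h. {x \<in> space M. rg_iso (ball x R) h} \<in> sets M)"

definition conv_distr :: "(nat \<Rightarrow> (rgraph \<Rightarrow> bool) \<Rightarrow> real) \<Rightarrow> rgraph measure \<Rightarrow> bool" where
  "conv_distr \<mu> M \<longleftrightarrow> (\<forall>R h. rooted_in_G h \<longrightarrow>
     ((\<lambda>N. \<mu> N (\<lambda>x. rg_iso (ball x R) h)) \<longlongrightarrow>
        measure M {x \<in> space M. rg_iso (ball x R) h}) sequentially)"

end

theory Submission
  imports Defs "HOL-Real_Asymp.Real_Asymp"
begin


definition U :: "nat \<Rightarrow> int set set" where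
  "U N = {{x, y} | x y. (x, y) \<in> pairsN N}"

definition Sh :: "real \<Rightarrow> nat \<Rightarrow> int set set" where
  "Sh L N = {{x, y} | x y. (x, y) \<in> pairsN N \<and> real_of_int (y - x) \<le> L}"

lemma pairsN_sub: "pairsN N \<subseteq> {1..int N} \<times> {1..int N}"
  by (auto simp: pairsN_def)

lemma finite_pairsN: "finite (pairsN N)"
  using pairsN_sub by (rule finite_subset) auto

lemma card_pairsN_le: "card (pairsN N) \<le> N * N"
proof -
  have "card (pairsN N) \<le> card ({1..int N} \<times> {1..int N})"
    by (rule card_mono[OF _ pairsN_sub]) auto
  also have "\<dots> = N * N" by (simp add: card_cartesian_product)
  finally show ?thesis .
qed

lemma U_image: "U N = (\<lambda>(x, y). {x, y}) ` pairsN N"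
  by (auto simp: U_def)

lemma finite_U: "finite (U N)"
  unfolding U_image using finite_pairsN by simp

lemma Sh_sub_U: "Sh L N \<subseteq> U N"
  by (auto simp: Sh_def U_def)

lemma finite_Sh: "finite (Sh L N)"
  using Sh_sub_U finite_U by (rule finite_subset)

lemma edge_sets_eq: "edge_sets N = Pow (U N)"
  by (simp add: edge_sets_def U_def)

lemma finite_edge_sets: "finite (edge_sets N)"
  by (simp add: edge_sets_eq finite_U)

lemma U_memD: "e \<in> U N \<Longrightarrow> \<exists>x y. e = {x, y} \<and> 1 \<le> x \<and> x < y \<and> y \<le> int N"
  by (auto simp: U_def pairsN_def)

lemma graph_of_simps[simp]: "verts (graph_of N E) = {1..int N}" "edges (graph_of N E) = E"
  by (simp_all add: graph_of_def verts_def edges_def)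

lemma U_memD2: "{x, y} \<in> U N \<Longrightarrow> x \<in> {1..int N} \<and> y \<in> {1..int N} \<and> x \<noteq> y"
proof -
  assume "{x, y} \<in> U N"
  then obtain a c where h: "{x,y} = {a,c}" "1 \<le> a" "a < c" "c \<le> int N" using U_memD by blast
  from h(1) have "(x = a \<and> y = c) \<or> (x = c \<and> y = a)" by (simp add: doubleton_eq_iff)
  then show ?thesis using h(2-4) by auto
qed

lemma in_G_graph_of: assumes "E \<subseteq> U N" shows "in_G (graph_of N E)"
proof -
  have 1: "\<exists>x y. x \<noteq> y \<and> x \<in> verts (graph_of N E) \<and> y \<in> verts (graph_of N E) \<and> e = {x, y}"
    if he: "e \<in> edges (graph_of N E)" for e
  proof -
    have "e \<in> U N" using he assms by auto
    then obtain a c where "e = {a,c}" "1 \<le> a" "a < c" "c \<le> int N" using U_memD by blast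
    then show ?thesis by (intro exI[of _ a] exI[of _ c]) auto
  qed
  have 2: "finite {y. {x, y} \<in> edges (graph_of N E)}" for x
  proof (rule finite_subset[of _ "{1..int N}"])
    show "{y. {x, y} \<in> edges (graph_of N E)} \<subseteq> {1..int N}"
    proof
      fix y assume "y \<in> {y. {x, y} \<in> edges (graph_of N E)}"
      then have "{x,y} \<in> U N" using assms by auto
      then show "y \<in> {1..int N}" using U_memD2 by blast
    qed
  qed auto
  show ?thesis unfolding in_G_def
    by (intro conjI ballI 1 2)
qed

lemma Sh_memI: "(x, y) \<in> pairsN N \<Longrightarrow> real_of_int (y - x) \<le> L \<Longrightarrow> {x, y} \<in> Sh L N"
  unfolding Sh_def by blast

lemma good_iff: assumes "E \<subseteq> U N"
  shows "graph_of N E \<in> LL L \<longleftrightarrow> Sh L N \<subseteq> E"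
proof
  assume "graph_of N E \<in> LL L"
  then have H: "\<And>x y. x \<in> {1..int N} \<Longrightarrow> y \<in> {1..int N} \<Longrightarrow> 0 < \<bar>x - y\<bar> \<Longrightarrow>
     real_of_int \<bar>x - y\<bar> \<le> L \<Longrightarrow> {x, y} \<in> E"
    unfolding LL_def mem_Collect_eq graph_of_simps by blast
  show "Sh L N \<subseteq> E"
  proof
    fix e assume "e \<in> Sh L N"
    then obtain x y where e: "e = {x,y}" "(x,y) \<in> pairsN N" "real_of_int (y - x) \<le> L"
      unfolding Sh_def by blast
    then have "x \<in> {1..int N}" "y \<in> {1..int N}" "0 < \<bar>x - y\<bar>" "\<bar>x - y\<bar> = y - x"
      by (auto simp: pairsN_def)
    with e H[of x y] show "e \<in> E" by simp
  qed
next
  assume S: "Sh L N \<subseteq> E"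
  have H2: "{x, y} \<in> E" if "x \<in> {1..int N}" "y \<in> {1..int N}" "0 < \<bar>x - y\<bar>"
     "real_of_int \<bar>x - y\<bar> \<le> L" for x y
  proof (cases "x < y")
    case True
    then have "(x,y) \<in> pairsN N" "\<bar>x - y\<bar> = y - x" using that by (auto simp: pairsN_def)
    then have "{x,y} \<in> Sh L N" using that Sh_memI by simp
    then show ?thesis using S by blast
  next
    case False
    then have "y < x" using that by auto
    then have "(y,x) \<in> pairsN N" "\<bar>x - y\<bar> = x - y" using that by (auto simp: pairsN_def)
    then have "{y,x} \<in> Sh L N" using that Sh_memI by simp
    then show ?thesis using S by (auto simp: insert_commute)
  qed
  show "graph_of N E \<in> LL L"
    unfolding LL_def mem_Collect_eq
  proof (intro conjI ballI impI)
    show "in_G (graph_of N E)" using in_G_graph_of[OF assms] .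
    fix x y assume h1: "x \<in> verts (graph_of N E)" and h2: "y \<in> verts (graph_of N E)"
      and h3: "0 < \<bar>x - y\<bar> \<and> real_of_int \<bar>x - y\<bar> \<le> L"
    show "{x, y} \<in> edges (graph_of N E)"
      using H2[of x y] h1 h2 h3 by simp
  qed
qed

lemma edge_prob_bounds: "0 \<le> edge_prob \<gamma> x y" "edge_prob \<gamma> x y \<le> 1"
  by (auto simp: edge_prob_def)

lemma PN_nonneg: "0 \<le> PN \<gamma> N E"
  unfolding PN_def by (rule prod_nonneg) (auto simp: edge_prob_bounds)

lemma tweight_nonneg: "0 \<le> tweight b p \<gamma> N E"
  unfolding tweight_def by (simp add: PN_nonneg)


definition pset :: "int \<times> int \<Rightarrow> int set" where "pset xy = {fst xy, snd xy}"

definition mcount :: "nat \<Rightarrow> int set set \<Rightarrow> nat" where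
  "mcount N D = card {xy \<in> pairsN N. pset xy \<in> D}"

lemma inj_pset: "inj_on pset (pairsN N)"
proof (rule inj_onI)
  fix u v assume u: "u \<in> pairsN N" and v: "v \<in> pairsN N" and e: "pset u = pset v"
  obtain a b where ab: "u = (a, b)" by (cases u)
  obtain c d where cd: "v = (c, d)" by (cases v)
  have "a < b" "c < d" using u v ab cd by (auto simp: pairsN_def)
  moreover have "{a, b} = {c, d}" using e ab cd by (simp add: pset_def)
  ultimately have "a = c \<and> b = d" by (auto simp: doubleton_eq_iff)
  then show "u = v" using ab cd by simp
qed

lemma mcount_eq: assumes "D \<subseteq> U N" shows "mcount N D = card D"
proof -
  have "pset ` {xy \<in> pairsN N. pset xy \<in> D} = D"
  proof
    show "pset ` {xy \<in> pairsN N. pset xy \<in> D} \<subseteq> D" by blast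
    show "D \<subseteq> pset ` {xy \<in> pairsN N. pset xy \<in> D}"
    proof
      fix d assume d: "d \<in> D"
      then have "d \<in> U N" using assms by blast
      then obtain x y where "d = {x, y}" "(x, y) \<in> pairsN N" unfolding U_def by blast
      then have "d = pset (x, y)" "(x, y) \<in> {xy \<in> pairsN N. pset xy \<in> D}"
        using d by (auto simp: pset_def)
      then show "d \<in> pset ` {xy \<in> pairsN N. pset xy \<in> D}" by blast
    qed
  qed
  moreover have "inj_on pset {xy \<in> pairsN N. pset xy \<in> D}"
    using inj_pset by (rule inj_on_subset) blast
  ultimately show ?thesis unfolding mcount_def using card_image by metis
qed

definition fac :: "real \<Rightarrow> int set set \<Rightarrow> int \<times> int \<Rightarrow> real" where
  "fac \<gamma> E xy = (if pset xy \<in> E then edge_prob \<gamma> (fst xy) (snd xy) else 1 - edge_prob \<gamma> (fst xy) (snd xy))"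

lemma PN_fac: "PN \<gamma> N E = (\<Prod>xy\<in>pairsN N. fac \<gamma> E xy)"
  unfolding PN_def fac_def pset_def by (simp add: case_prod_beta)

lemma fac_nonneg: "0 \<le> fac \<gamma> E xy"
  using edge_prob_bounds[of \<gamma> "fst xy" "snd xy"] by (simp add: fac_def)

lemma PN_not_nn: assumes "(z, z + 1) \<in> pairsN N" "{z, z + 1} \<notin> E" shows "PN \<gamma> N E = 0"
proof -
  have "fac \<gamma> E (z, z + 1) = 0" using assms(2) by (simp add: fac_def pset_def edge_prob_def)
  then show ?thesis unfolding PN_fac using assms(1) finite_pairsN by (metis prod_zero)
qed

lemma Sh_memD: assumes "{x, y} \<in> Sh L N" "x < y" shows "real_of_int (y - x) \<le> L"
proof -
  obtain a c where h: "{x, y} = {a, c}" "(a, c) \<in> pairsN N" "real_of_int (c - a) \<le> L"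
    using assms(1) unfolding Sh_def by blast
  then have "a < c" by (simp add: pairsN_def)
  with h(1) assms(2) have "x = a \<and> y = c" by (auto simp: doubleton_eq_iff)
  then show ?thesis using h(3) by simp
qed

lemma PN_bound:
  assumes D: "D \<subseteq> Sh L N" "D \<subseteq> F" and g: "\<gamma> \<ge> 0"
  shows "PN \<gamma> N (F - D) \<le> exp (L powr \<gamma>) ^ mcount N D * PN \<gamma> N F"
proof -
  define K where "K = exp (L powr \<gamma>)"
  have K1: "1 \<le> K" unfolding K_def by simp
  define gg where "gg xy = (if pset xy \<in> D then K else 1)" for xy
  have pt: "fac \<gamma> (F - D) xy \<le> gg xy * fac \<gamma> F xy" if xy: "xy \<in> pairsN N" for xy
  proof -
    obtain x y where xy_eq: "xy = (x, y)" by (cases xy)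
    have xy2: "1 \<le> x" "x < y" "y \<le> int N" using xy xy_eq by (auto simp: pairsN_def)
    show ?thesis
    proof (cases "pset xy \<in> D")
      case True
      then have inF: "pset xy \<in> F" using D by blast
      have dist: "real_of_int (y - x) \<le> L" using True D xy2 xy_eq Sh_memD[of x y L N]
        by (auto simp: pset_def)
      have "1 - edge_prob \<gamma> x y \<le> K * edge_prob \<gamma> x y"
      proof (cases "\<bar>x - y\<bar> = 1")
        case True then show ?thesis using K1 by (simp add: edge_prob_def)
      next
        case False
        have ab: "real_of_int \<bar>x - y\<bar> = real_of_int (y - x)" using xy2 by simp
        have "real_of_int \<bar>x - y\<bar> powr \<gamma> \<le> L powr \<gamma>"
          using powr_mono2[OF g _ dist] ab xy2 by simp
        then have "exp 0 \<le> K * exp (- (real_of_int \<bar>x - y\<bar> powr \<gamma>))"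
          unfolding K_def mult_exp_exp by simp
        then have "1 \<le> K * edge_prob \<gamma> x y" using False by (simp add: edge_prob_def)
        then show ?thesis using edge_prob_bounds[of \<gamma> x y] by linarith
      qed
      then show ?thesis using True inF xy_eq by (simp add: fac_def gg_def)
    next
      case False
      then have "fac \<gamma> (F - D) xy = fac \<gamma> F xy" by (simp add: fac_def)
      then show ?thesis using False by (simp add: gg_def)
    qed
  qed
  have "PN \<gamma> N (F - D) \<le> (\<Prod>xy\<in>pairsN N. gg xy * fac \<gamma> F xy)"
    unfolding PN_fac by (rule prod_mono) (use pt fac_nonneg in auto)
  also have "\<dots> = (\<Prod>xy\<in>pairsN N. gg xy) * PN \<gamma> N F"
    unfolding PN_fac by (simp add: prod.distrib)
  also have "(\<Prod>xy\<in>pairsN N. gg xy) = K ^ mcount N D"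
  proof -
    have "(\<Prod>xy\<in>pairsN N. gg xy) = (\<Prod>xy\<in>{xy \<in> pairsN N. pset xy \<in> D}. K)"
      unfolding gg_def using finite_pairsN by (simp add: prod.If_cases Int_def)
    then show ?thesis by (simp add: mcount_def)
  qed
  finally show ?thesis by (simp add: K_def)
qed


lemma reach_mono: "E \<subseteq> F \<Longrightarrow> reach (graph_of N E) n x y \<Longrightarrow> reach (graph_of N F) n x y"
  unfolding reach_def graph_of_simps by blast

lemma reach_0: "reach g 0 x y \<Longrightarrow> x = y"
  unfolding reach_def by (auto simp: length_Suc_conv)

lemma reach_1: "reach g 1 x y \<Longrightarrow> {x, y} \<in> edges g"
  unfolding reach_def by (auto simp: length_Suc_conv)

lemma reach_edge: "x \<in> verts g \<Longrightarrow> {x, y} \<in> edges g \<Longrightarrow> reach g 1 x y"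
  unfolding reach_def by (intro conjI exI[of _ "[x, y]"]) auto

lemma reach_refl: "x \<in> verts g \<Longrightarrow> reach g 0 x x"
  unfolding reach_def by (intro conjI exI[of _ "[x]"]) auto

definition nn :: "nat \<Rightarrow> int set set \<Rightarrow> bool" where
  "nn N E \<longleftrightarrow> (\<forall>z. 1 \<le> z \<and> z + 1 \<le> int N \<longrightarrow> {z, z + 1} \<in> E)"

lemma reach_path:
  assumes "nn N E" "1 \<le> x" "x \<le> y" "y \<le> int N"
  shows "reach (graph_of N E) (nat (y - x)) x y"
proof -
  define n where "n = nat (y - x)"
  define ps where "ps = map (\<lambda>i. x + int i) [0..<n + 1]"
  have "length ps = n + 1" by (simp add: ps_def)
  moreover have "hd ps = x" by (simp add: ps_def upt_conv_Cons del: upt_Suc)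
  moreover have "last ps = y" using assms by (simp add: ps_def last_map n_def)
  moreover have "{ps ! i, ps ! (i + 1)} \<in> E" if "i < n" for i
  proof -
    have "ps ! i = x + int i" "ps ! (i + 1) = x + int i + 1" using that
      by (simp_all add: ps_def nth_map del: upt_Suc)
    moreover have "1 \<le> x + int i" "x + int i + 1 \<le> int N" using that assms by (auto simp: n_def)
    ultimately show ?thesis using assms(1) unfolding nn_def by auto
  qed
  ultimately show ?thesis unfolding reach_def n_def[symmetric] using assms by auto
qed

lemma gdist_reach: "reach g n x y \<Longrightarrow> reach g (gdist g x y) x y"
  unfolding gdist_def by (rule LeastI)

lemma gdist_le: "reach g n x y \<Longrightarrow> gdist g x y \<le> n"
  unfolding gdist_def by (rule Least_le)

lemma tangent:
  fixes a bb r :: real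
  assumes "0 \<le> bb" "bb \<le> a" "0 < a" "0 < r" "r \<le> 1"
  shows "r * (a - bb) * a powr (r - 1) \<le> a powr r - bb powr r"
proof -
  have ar: "a powr (r - 1) = a powr r / a" using assms by (simp add: powr_diff)
  define X where "X = a powr r"
  have X: "0 < X" using assms by (simp add: X_def)
  show ?thesis
  proof (cases "bb = 0")
    case True
    have "r * a * (X / a) \<le> X" using assms X by simp
    then show ?thesis using True assms ar X_def by simp
  next
    case False
    then have bpos: "0 < bb" using assms by simp
    have "(bb / a) powr r * 1 powr (1 - r) \<le> r * (bb / a) + (1 - r) * 1"
      by (rule Youngs_inequality_0) (use assms bpos in auto)
    then have "bb powr r / X \<le> r * (bb / a) + (1 - r)"
      using assms bpos by (simp add: powr_divide X_def)
    then have "bb powr r \<le> X * (r * (bb / a) + (1 - r))"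
      using X by (simp add: divide_le_eq mult.commute)
    moreover have "X * (r * (bb / a) + (1 - r)) = X - r * (a - bb) * (X / a)"
      using assms by (simp add: field_simps)
    ultimately show ?thesis using ar X_def by simp
  qed
qed


definition SS :: "real \<Rightarrow> nat \<Rightarrow> int set set \<Rightarrow> real" where
  "SS p N E = (\<Sum>xy\<in>pairsN N. real (gdist (graph_of N E) (fst xy) (snd xy)) powr p)"

lemma Hp_eq: "Hp p (graph_of N E) = (SS p N E / real (N choose 2)) powr (1 / p)"
proof -
  have "{(x, y). x \<in> verts (graph_of N E) \<and> y \<in> verts (graph_of N E) \<and> x < y} = pairsN N"
    by (auto simp: pairsN_def)
  then show ?thesis unfolding Hp_def SS_def by (simp add: case_prod_beta)
qed

lemma choose2_bounds:
  assumes "N \<ge> 2"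
  shows "real N ^ 2 / 4 \<le> real (N choose 2)" "real (N choose 2) \<le> real N ^ 2 / 2"
proof -
  have ev: "even (N * (N - 1))" by (cases N) auto
  have "2 * (N choose 2) = N * (N - 1)" using ev by (simp add: choose_two)
  then have "real (2 * (N choose 2)) = real (N * (N - 1))" by (simp only:)
  then have e: "2 * real (N choose 2) = real N * (real N - 1)" using assms
    by (simp add: of_nat_diff)
  have "real N \<ge> 2" using assms by simp
  then have "2 * real N \<le> real N * real N" by (intro mult_right_mono) auto
  then have "real N ^ 2 / 2 \<le> real N * (real N - 1)" by (simp add: power2_eq_square algebra_simps)
  then show "real N ^ 2 / 4 \<le> real (N choose 2)" using e by simp
  show "real (N choose 2) \<le> real N ^ 2 / 2" using e by (simp add: power2_eq_square algebra_simps)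
qed

lemma dist_facts:
  assumes nnE: "nn N (F - D)" and DF: "D \<subseteq> F" and xy: "(x, y) \<in> pairsN N"
  shows "gdist (graph_of N F) x y \<le> gdist (graph_of N (F - D)) x y"
    "gdist (graph_of N (F - D)) x y \<le> N"
    "{x, y} \<in> D \<Longrightarrow> 2 \<le> gdist (graph_of N (F - D)) x y \<and> gdist (graph_of N F) x y \<le> 1"
proof -
  have xy2: "1 \<le> x" "x < y" "y \<le> int N" using xy by (auto simp: pairsN_def)
  have r: "reach (graph_of N (F - D)) (nat (y - x)) x y"
    using reach_path[OF nnE] xy2 by simp
  have rE: "reach (graph_of N (F - D)) (gdist (graph_of N (F - D)) x y) x y"
    using gdist_reach[OF r] .
  have "gdist (graph_of N (F - D)) x y \<le> nat (y - x)" using gdist_le[OF r] .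
  then show "gdist (graph_of N (F - D)) x y \<le> N" using xy2 by linarith
  have "reach (graph_of N F) (gdist (graph_of N (F - D)) x y) x y"
    using reach_mono[OF _ rE] by blast
  then show "gdist (graph_of N F) x y \<le> gdist (graph_of N (F - D)) x y" by (rule gdist_le)
  assume inD: "{x, y} \<in> D"
  have "gdist (graph_of N (F - D)) x y \<noteq> 0"
  proof
    assume "gdist (graph_of N (F - D)) x y = 0"
    then have "reach (graph_of N (F - D)) 0 x y" using rE by simp
    then have "x = y" by (rule reach_0)
    then show False using xy2 by simp
  qed
  moreover have "gdist (graph_of N (F - D)) x y \<noteq> 1"
  proof
    assume "gdist (graph_of N (F - D)) x y = 1"
    then have "reach (graph_of N (F - D)) 1 x y" using rE by simp
    then have "{x, y} \<in> edges (graph_of N (F - D))" by (rule reach_1)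
    then have "{x, y} \<in> F - D" by simp
    then show False using inD by blast
  qed
  ultimately have "2 \<le> gdist (graph_of N (F - D)) x y" by linarith
  moreover have "reach (graph_of N F) 1 x y"
    using xy2 inD DF by (intro reach_edge) auto
  ultimately show "2 \<le> gdist (graph_of N (F - D)) x y \<and> gdist (graph_of N F) x y \<le> 1"
    using gdist_le by blast
qed


lemma Hp_drop:
  assumes N2: "N \<ge> 2" and p: "p \<ge> 1" and DF: "D \<subseteq> F" and nnE: "nn N (F - D)"
  shows "Hp p (graph_of N F) + real (mcount N D) * (1 / (2 * p) * real N powr (-1 - p))
           \<le> Hp p (graph_of N (F - D))"
proof -
  define E where "E = F - D"
  define gE where "gE xy = real (gdist (graph_of N E) (fst xy) (snd xy))" for xy
  define gF where "gF xy = real (gdist (graph_of N F) (fst xy) (snd xy))" for xy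
  define C where "C = real (N choose 2)"
  define m where "m = real (mcount N D)"
  define r where "r = 1 / p"
  have Cb: "real N ^ 2 / 4 \<le> C" "C \<le> real N ^ 2 / 2" using choose2_bounds[OF N2] by (simp_all add: C_def)
  have Npos: "real N > 0" using N2 by simp
  have "0 < real N ^ 2 / 4" using Npos by simp
  then have Cpos: "C > 0" using Cb(1) by linarith
  have r: "0 < r" "r \<le> 1" using p by (simp_all add: r_def)
  have pt: "gF xy powr p \<le> gE xy powr p \<and> gE xy powr p \<le> real N powr p \<and>
            (pset xy \<in> D \<longrightarrow> gF xy powr p + 1 \<le> gE xy powr p)" if xy: "xy \<in> pairsN N" for xy
  proof -
    have xy': "(fst xy, snd xy) \<in> pairsN N" using xy by simp
    note df = dist_facts[OF nnE DF xy']
    have 1: "gF xy \<le> gE xy" "gE xy \<le> real N" "0 \<le> gF xy"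
      using df(1,2) by (simp_all add: gE_def gF_def E_def)
    have "gF xy powr p \<le> gE xy powr p" using powr_mono2[of p "gF xy" "gE xy"] 1 p by simp
    moreover have "gE xy powr p \<le> real N powr p" using powr_mono2[of p "gE xy" "real N"] 1 p by simp
    moreover have "gF xy powr p + 1 \<le> gE xy powr p" if inD: "pset xy \<in> D"
    proof -
      have "{fst xy, snd xy} \<in> D" using inD by (simp add: pset_def)
      from df(3)[OF this] have h: "2 \<le> gE xy" "gF xy \<le> 1" by (simp_all add: gE_def gF_def E_def)
      have "gF xy = 0 \<or> gF xy = 1" using h(2) by (auto simp: gF_def)
      then have a: "gF xy powr p \<le> 1" using p by auto
      have "(2::real) powr 1 \<le> 2 powr p" using p by (intro powr_mono) auto
      also have "\<dots> \<le> gE xy powr p" using powr_mono2[of p 2 "gE xy"] h p by simp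
      finally show ?thesis using a by simp
    qed
    ultimately show ?thesis by blast
  qed
  have SE: "SS p N E = (\<Sum>xy\<in>pairsN N. gE xy powr p)" by (simp add: SS_def gE_def)
  have SF: "SS p N F = (\<Sum>xy\<in>pairsN N. gF xy powr p)" by (simp add: SS_def gF_def)
  have msum: "m = (\<Sum>xy\<in>pairsN N. if pset xy \<in> D then 1 else 0)"
    unfolding m_def mcount_def by (simp add: sum.inter_filter[symmetric] finite_pairsN)
  have diff: "SS p N F + m \<le> SS p N E"
  proof -
    have "SS p N F + m = (\<Sum>xy\<in>pairsN N. gF xy powr p + (if pset xy \<in> D then 1 else 0))"
      unfolding SF msum by (simp add: sum.distrib)
    also have "\<dots> \<le> (\<Sum>xy\<in>pairsN N. gE xy powr p)"
      by (rule sum_mono) (use pt in auto)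
    finally show ?thesis unfolding SE .
  qed
  have SF0: "0 \<le> SS p N F" unfolding SF by (rule sum_nonneg) simp
  have SEub: "SS p N E \<le> real N * real N * real N powr p"
  proof -
    have "SS p N E \<le> real (card (pairsN N)) * real N powr p"
      unfolding SE by (rule sum_bounded_above) (use pt in auto)
    also have "\<dots> \<le> real (N * N) * real N powr p"
    proof (rule mult_right_mono)
      show "real (card (pairsN N)) \<le> real (N * N)" using card_pairsN_le[of N] by (simp only: of_nat_le_iff)
    qed simp
    finally show ?thesis by simp
  qed
  define a where "a = SS p N E / C"
  define bb where "bb = SS p N F / C"
  have HE: "Hp p (graph_of N (F - D)) = a powr r" by (simp add: Hp_eq a_def C_def r_def E_def)
  have HF: "Hp p (graph_of N F) = bb powr r" by (simp add: Hp_eq bb_def C_def r_def)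
  have m0: "0 \<le> m" by (simp add: m_def)
  have bb0: "0 \<le> bb" using SF0 Cpos by (simp add: bb_def)
  have bba: "bb + m / C \<le> a" using diff Cpos by (simp add: a_def bb_def add_divide_distrib[symmetric] divide_right_mono)
  show ?thesis
  proof (cases "m = 0")
    case True
    have "bb powr r \<le> a powr r" using powr_mono2[of r bb a] r bb0 bba True by simp
    then show ?thesis using HE HF True by (simp add: m_def)
  next
    case False
    then have mpos: "m > 0" using m0 by simp
    have mC: "0 < m / C" using mpos Cpos by simp
    have apos: "a > 0" using bba bb0 mC by linarith
    have bba': "bb \<le> a" using bba mC by linarith
    have tg: "r * (a - bb) * a powr (r - 1) \<le> a powr r - bb powr r"
      using tangent[OF bb0 bba' apos r] .
    have a4: "a \<le> 4 * real N powr p"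
    proof -
      have "a \<le> real N * real N * real N powr p / C" unfolding a_def using SEub Cpos by (simp add: divide_right_mono)
      also have "\<dots> \<le> real N * real N * real N powr p / (real N ^ 2 / 4)"
        using Cb(1) Cpos Npos by (intro divide_left_mono) auto
      also have "\<dots> = 4 * real N powr p"
      proof -
        define X where "X = real N powr p"
        define Y where "Y = real N"
        have "Y > 0" using Npos by (simp add: Y_def)
        then have "Y * Y * X / (Y ^ 2 / 4) = 4 * X" by (simp add: power2_eq_square field_simps)
        then show ?thesis by (simp add: X_def Y_def)
      qed
      finally show ?thesis .
    qed
    have pw: "1 / 4 * real N powr (1 - p) \<le> a powr (r - 1)"
    proof -
      have "(4 * real N powr p) powr (r - 1) \<le> a powr (r - 1)"
        by (rule powr_mono2') (use r apos a4 in auto)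
      moreover have "(4 * real N powr p) powr (r - 1) = 4 powr (r - 1) * real N powr (p * (r - 1))"
        by (simp only: powr_mult powr_powr)
      moreover have "p * (r - 1) = 1 - p" using p by (simp add: r_def right_diff_distrib)
      moreover have f4: "(4::real) powr (-1) \<le> 4 powr (r - 1)" using r by (intro powr_mono) auto
      moreover have f5: "(4::real) powr (-1) = 1 / 4" by (simp add: powr_minus_divide)
      ultimately have "1 / 4 * real N powr (1 - p) \<le> 4 powr (r - 1) * real N powr (1 - p)"
      proof (intro mult_right_mono)
        show "1 / 4 \<le> (4::real) powr (r - 1)" using f4 f5 by simp
      qed simp
      then show ?thesis using \<open>(4 * real N powr p) powr (r - 1) \<le> a powr (r - 1)\<close>
        \<open>(4 * real N powr p) powr (r - 1) = 4 powr (r - 1) * real N powr (p * (r - 1))\<close>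
        \<open>p * (r - 1) = 1 - p\<close> by simp
    qed
    have mb: "m * 2 / real N ^ 2 \<le> a - bb"
    proof -
      have "m * 2 / real N ^ 2 = m / (real N ^ 2 / 2)" by simp
      also have "\<dots> \<le> m / C" using Cb(2) Cpos m0 Npos by (intro divide_left_mono) auto
      finally show ?thesis using bba by simp
    qed
    have "m * (1 / (2 * p) * real N powr (-1 - p)) = r * (m * 2 / real N ^ 2) * (1 / 4 * real N powr (1 - p))"
    proof -
      have n2: "real N powr 2 = real N ^ 2" using Npos powr_realpow[of "real N" 2] by simp
      have "real N powr (-1 - p) = real N powr ((1 - p) - 2)" by simp
      also have "\<dots> = real N powr (1 - p) / real N powr 2" by (rule powr_diff)
      finally have e1: "real N powr (-1 - p) = real N powr (1 - p) / real N ^ 2" using n2 by simp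
      have gen: "m * (1 / (2 * p) * (X / Y)) = 1 / p * (m * 2 / Y) * (1 / 4 * X)"
        if "Y > 0" for X Y using p that by (simp add: field_simps)
      show ?thesis unfolding e1 r_def by (rule gen) (use Npos in simp)
    qed
    also have "\<dots> \<le> r * (a - bb) * a powr (r - 1)"
    proof (rule mult_mono)
      show "r * (m * 2 / real N ^ 2) \<le> r * (a - bb)" using mb r by (intro mult_left_mono) simp_all
      show "0 \<le> r * (a - bb)" using bba' r by simp
      show "0 \<le> 1 / 4 * real N powr (1 - p)" by simp
    qed (rule pw)
    finally show ?thesis using tg HE HF by (simp add: m_def)
  qed
qed


lemma sum_pow_card:
  fixes \<delta> :: real assumes "finite S"
  shows "(\<Sum>D\<in>Pow S - {{}}. \<delta> ^ card D) = (1 + \<delta>) ^ card S - 1"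
proof -
  have "(1 + \<delta>) ^ card S = (\<Prod>x\<in>S. \<delta> + 1)" by (simp add: add.commute)
  also have "\<dots> = (\<Sum>X\<in>Pow S. (\<Prod>x\<in>X. \<delta>) * (\<Prod>x\<in>S - X. 1))"
    by (rule prod_add) (rule assms)
  also have "\<dots> = (\<Sum>X\<in>Pow S. \<delta> ^ card X)" by simp
  also have "\<dots> = \<delta> ^ card ({}::'a set) + (\<Sum>X\<in>Pow S - {{}}. \<delta> ^ card X)"
    using assms by (intro sum.remove) auto
  finally show ?thesis by simp
qed

lemma bad_sum:
  fixes w :: "'a set \<Rightarrow> real"
  assumes fin: "finite Uu" and SU: "S \<subseteq> Uu" and d0: "0 \<le> \<delta>"
    and wb: "\<And>F D. F \<subseteq> Uu \<Longrightarrow> S \<subseteq> F \<Longrightarrow> D \<subseteq> S \<Longrightarrow> w (F - D) \<le> \<delta> ^ card D * w F"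
    and w0: "\<And>F. 0 \<le> w F"
  shows "(\<Sum>E\<in>{E\<in>Pow Uu. \<not> S \<subseteq> E}. w E) \<le> (\<Sum>F\<in>{F\<in>Pow Uu. S \<subseteq> F}. w F) * ((1 + \<delta>) ^ card S - 1)"
proof -
  define A where "A = {F\<in>Pow Uu. S \<subseteq> F}"
  define B where "B = Pow S - {{}}"
  have finA: "finite A" using fin by (simp add: A_def)
  have finS: "finite S" using fin SU by (rule finite_subset[rotated])
  have finB: "finite B" using finS by (simp add: B_def)
  have bij: "bij_betw (\<lambda>(F, D). F - D) (A \<times> B) {E\<in>Pow Uu. \<not> S \<subseteq> E}"
  proof (rule bij_betw_byWitness[where f' = "\<lambda>E. (E \<union> S, S - E)"])
    show "\<forall>a\<in>A \<times> B. (\<lambda>E. (E \<union> S, S - E)) (case a of (F, D) \<Rightarrow> F - D) = a"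
      unfolding A_def B_def by auto
    show "\<forall>a'\<in>{E \<in> Pow Uu. \<not> S \<subseteq> E}. (case (\<lambda>E. (E \<union> S, S - E)) a' of (F, D) \<Rightarrow> F - D) = a'"
      by auto
    show "(\<lambda>(F, D). F - D) ` (A \<times> B) \<subseteq> {E \<in> Pow Uu. \<not> S \<subseteq> E}"
      unfolding A_def B_def by auto
    show "(\<lambda>E. (E \<union> S, S - E)) ` {E \<in> Pow Uu. \<not> S \<subseteq> E} \<subseteq> A \<times> B"
      unfolding A_def B_def using SU by auto
  qed
  have "(\<Sum>E\<in>{E\<in>Pow Uu. \<not> S \<subseteq> E}. w E) = (\<Sum>x\<in>A \<times> B. w ((\<lambda>(F, D). F - D) x))"
    using sum.reindex_bij_betw[OF bij, of w] by simp
  also have "\<dots> = (\<Sum>F\<in>A. \<Sum>D\<in>B. w (F - D))"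
    by (simp add: sum.cartesian_product case_prod_beta)
  also have "\<dots> \<le> (\<Sum>F\<in>A. \<Sum>D\<in>B. \<delta> ^ card D * w F)"
    by (intro sum_mono wb) (auto simp: A_def B_def)
  also have "\<dots> = (\<Sum>F\<in>A. w F * (\<Sum>D\<in>B. \<delta> ^ card D))"
    by (simp add: sum_distrib_left mult.commute)
  also have "\<dots> = (\<Sum>F\<in>A. w F) * ((1 + \<delta>) ^ card S - 1)"
    by (simp add: sum_distrib_right B_def sum_pow_card[OF finS])
  finally show ?thesis by (simp add: A_def)
qed

definition cc :: "real \<Rightarrow> nat \<Rightarrow> real" where
  "cc p N = 1 / (2 * p) * real N powr (-1 - p)"

lemma weight_bound:
  assumes N2: "N \<ge> 2" and p: "p \<ge> 1" and g: "\<gamma> \<ge> 0"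
    and D: "D \<subseteq> Sh L N" "D \<subseteq> F" and FU: "F \<subseteq> U N"
  shows "tweight b p \<gamma> N (F - D) \<le> (exp (L powr \<gamma>) * exp (- (real N powr b) * cc p N)) ^ card D * tweight b p \<gamma> N F"
proof -
  have mc: "mcount N D = card D" using D FU by (intro mcount_eq) blast
  define K where "K = exp (L powr \<gamma>)"
  define Q where "Q = exp (- (real N powr b) * cc p N)"
  have K0: "0 \<le> K" "0 \<le> Q" by (simp_all add: K_def Q_def)
  have rhs0: "0 \<le> (K * Q) ^ card D * tweight b p \<gamma> N F"
    using K0 tweight_nonneg by simp
  show ?thesis
  proof (cases "nn N (F - D)")
    case False
    then obtain z where "1 \<le> z" "z + 1 \<le> int N" "{z, z + 1} \<notin> F - D" unfolding nn_def by blast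
    then have "PN \<gamma> N (F - D) = 0" by (intro PN_not_nn) (auto simp: pairsN_def)
    then show ?thesis using rhs0 by (simp add: tweight_def K_def Q_def)
  next
    case True
    have hd: "Hp p (graph_of N F) + real (card D) * cc p N \<le> Hp p (graph_of N (F - D))"
      using Hp_drop[OF N2 p D(2) True] mc by (simp add: cc_def)
    have Nb: "0 \<le> real N powr b" by simp
    have "exp (- (real N powr b) * Hp p (graph_of N (F - D)))
        \<le> exp (- (real N powr b) * (Hp p (graph_of N F) + real (card D) * cc p N))"
      using mult_left_mono[OF hd Nb] by simp
    also have "\<dots> = exp (- (real N powr b) * Hp p (graph_of N F) + real (card D) * (- (real N powr b) * cc p N))"
      by (simp add: algebra_simps)
    also have "\<dots> = exp (- (real N powr b) * Hp p (graph_of N F)) * exp (real (card D) * (- (real N powr b) * cc p N))"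
      by (rule exp_add)
    also have "\<dots> = exp (- (real N powr b) * Hp p (graph_of N F)) * Q ^ card D"
      by (simp only: Q_def exp_of_nat_mult)
    finally have e1: "exp (- (real N powr b) * Hp p (graph_of N (F - D))) \<le>
        exp (- (real N powr b) * Hp p (graph_of N F)) * Q ^ card D" .
    have e2: "PN \<gamma> N (F - D) \<le> K ^ card D * PN \<gamma> N F"
      using PN_bound[OF D g] mc by (simp add: K_def)
    have "tweight b p \<gamma> N (F - D) \<le> (exp (- (real N powr b) * Hp p (graph_of N F)) * Q ^ card D) * (K ^ card D * PN \<gamma> N F)"
      unfolding tweight_def by (rule mult_mono[OF e1 e2]) (simp_all add: PN_nonneg K0)
    also have "\<dots> = (K * Q) ^ card D * tweight b p \<gamma> N F"
      by (simp add: tweight_def power_mult_distrib)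
    finally show ?thesis by (simp add: K_def Q_def)
  qed
qed


definition GG :: "real \<Rightarrow> real \<Rightarrow> real \<Rightarrow> real \<Rightarrow> nat \<Rightarrow> real" where
  "GG b p \<gamma> L N = (\<Sum>F\<in>{F\<in>edge_sets N. Sh L N \<subseteq> F}. tweight b p \<gamma> N F)"

definition BB :: "real \<Rightarrow> real \<Rightarrow> real \<Rightarrow> real \<Rightarrow> nat \<Rightarrow> real" where
  "BB b p \<gamma> L N = (\<Sum>E\<in>{E\<in>edge_sets N. \<not> Sh L N \<subseteq> E}. tweight b p \<gamma> N E)"

definition dd :: "real \<Rightarrow> real \<Rightarrow> real \<Rightarrow> real \<Rightarrow> nat \<Rightarrow> real" where
  "dd b p \<gamma> L N = exp (L powr \<gamma>) * exp (- (real N powr b) * cc p N)"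

lemma BB_le:
  assumes N2: "N \<ge> 2" and p: "p \<ge> 1" and g: "\<gamma> \<ge> 0"
  shows "BB b p \<gamma> L N \<le> GG b p \<gamma> L N * ((1 + dd b p \<gamma> L N) ^ card (Sh L N) - 1)"
  unfolding BB_def GG_def edge_sets_eq
proof (rule bad_sum[OF finite_U Sh_sub_U])
  show "0 \<le> dd b p \<gamma> L N" by (simp add: dd_def)
  show "\<And>F. 0 \<le> tweight b p \<gamma> N F" by (rule tweight_nonneg)
  fix F D assume "F \<subseteq> U N" "Sh L N \<subseteq> F" "D \<subseteq> Sh L N"
  then show "tweight b p \<gamma> N (F - D) \<le> dd b p \<gamma> L N ^ card D * tweight b p \<gamma> N F"
    using weight_bound[OF N2 p g, of D L F b] unfolding dd_def by blast
qed

lemma GG_pos: "0 < GG b p \<gamma> L N"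
proof -
  have "0 < PN \<gamma> N (U N)"
    unfolding PN_fac
  proof (rule prod_pos)
    fix xy assume "xy \<in> pairsN N"
    then have "pset xy \<in> U N" unfolding U_def pset_def by (cases xy) auto
    then show "0 < fac \<gamma> (U N) xy" by (simp add: fac_def edge_prob_def)
  qed
  then have "0 < tweight b p \<gamma> N (U N)" by (simp add: tweight_def)
  also have "\<dots> \<le> GG b p \<gamma> L N" unfolding GG_def
    by (rule member_le_sum) (auto simp: edge_sets_eq Sh_sub_U finite_U tweight_nonneg)
  finally show ?thesis .
qed

lemma BB_nonneg: "0 \<le> BB b p \<gamma> L N"
  unfolding BB_def by (rule sum_nonneg) (rule tweight_nonneg)

lemma Zc_split: "Zc b p \<gamma> N = GG b p \<gamma> L N + BB b p \<gamma> L N"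
proof -
  have "edge_sets N = {F\<in>edge_sets N. Sh L N \<subseteq> F} \<union> {E\<in>edge_sets N. \<not> Sh L N \<subseteq> E}" by blast
  then have "Zc b p \<gamma> N = (\<Sum>E\<in>{F\<in>edge_sets N. Sh L N \<subseteq> F} \<union> {E\<in>edge_sets N. \<not> Sh L N \<subseteq> E}. tweight b p \<gamma> N E)"
    unfolding Zc_def by simp
  also have "\<dots> = GG b p \<gamma> L N + BB b p \<gamma> L N"
    unfolding GG_def BB_def by (rule sum.union_disjoint) (auto simp: finite_edge_sets)
  finally show ?thesis .
qed

lemma tilted_eq: "tilted_prob b p \<gamma> N (\<lambda>g. g \<in> LL L) = GG b p \<gamma> L N / (GG b p \<gamma> L N + BB b p \<gamma> L N)"
proof -
  have "{E \<in> edge_sets N. graph_of N E \<in> LL L} = {F\<in>edge_sets N. Sh L N \<subseteq> F}"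
    using good_iff by (auto simp: edge_sets_eq)
  then show ?thesis unfolding tilted_prob_def Zc_split[of b p \<gamma> N L] GG_def by simp
qed

lemma card_Sh_le: "card (Sh L N) \<le> N * N"
proof -
  have "card (Sh L N) \<le> card (U N)" by (rule card_mono[OF finite_U Sh_sub_U])
  also have "\<dots> \<le> card (pairsN N)" unfolding U_image by (rule card_image_le[OF finite_pairsN])
  also have "\<dots> \<le> N * N" by (rule card_pairsN_le)
  finally show ?thesis .
qed

lemma eps_bounds:
  fixes \<delta> :: real assumes "0 \<le> \<delta>" "n \<le> N * N"
  shows "0 \<le> (1 + \<delta>) ^ n - 1" "(1 + \<delta>) ^ n - 1 \<le> exp (real N ^ 2 * \<delta>) - 1"
proof -
  show "0 \<le> (1 + \<delta>) ^ n - 1" using assms one_le_power[of "1 + \<delta>" n] by simp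
  have "(1 + \<delta>) ^ n \<le> exp \<delta> ^ n" using assms exp_ge_add_one_self[of \<delta>] by (intro power_mono) auto
  also have "\<dots> = exp (real n * \<delta>)" by (simp add: exp_of_nat_mult)
  also have "\<dots> \<le> exp (real N ^ 2 * \<delta>)"
  proof -
    have "real n \<le> real N ^ 2" using assms(2) by (simp add: power2_eq_square flip: of_nat_mult)
    then show ?thesis using assms(1) by (simp add: mult_right_mono)
  qed
  finally show "(1 + \<delta>) ^ n - 1 \<le> exp (real N ^ 2 * \<delta>) - 1" by simp
qed

lemma dd_lim:
  assumes p: "p \<ge> 1" and b: "b > p + 1"
  shows "(\<lambda>N. real N ^ 2 * dd b p \<gamma> L N) \<longlonglongrightarrow> 0"
proof -
  define e where "e = b - 1 - p"
  define c where "c = 1 / (2 * p)"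
  have e: "e > 0" using b by (simp add: e_def)
  have c: "c > 0" using p by (simp add: c_def)
  have lim: "(\<lambda>N::nat. real N ^ 2 * (exp (L powr \<gamma>) * exp (- (c * real N powr e)))) \<longlonglongrightarrow> 0"
    using e c by real_asymp
  have ev: "eventually (\<lambda>N. real N ^ 2 * (exp (L powr \<gamma>) * exp (- (c * real N powr e))) = real N ^ 2 * dd b p \<gamma> L N) sequentially"
    using eventually_gt_at_top[of 0]
  proof eventually_elim
    case (elim N)
    then have "real N powr b * cc p N = c * real N powr e"
      by (simp add: cc_def c_def e_def powr_add[symmetric] algebra_simps)
    then show ?case by (simp add: dd_def)
  qed
  show ?thesis using Lim_transform_eventually[OF lim ev] .
qed

lemma core:
  assumes g: "\<gamma> > 1" and p: "p \<ge> 1" and b: "b > p + 1"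
  shows "(\<lambda>N. tilted_prob b p \<gamma> N (\<lambda>g. g \<in> LL L)) \<longlonglongrightarrow> 1"
    "(\<lambda>N. BB b p \<gamma> L N / Zc b p \<gamma> N) \<longlonglongrightarrow> 0"
proof -
  define eps where "eps N = (1 + dd b p \<gamma> L N) ^ card (Sh L N) - 1" for N
  have dd0: "0 \<le> dd b p \<gamma> L N" for N by (simp add: dd_def)
  have epsb: "0 \<le> eps N" "eps N \<le> exp (real N ^ 2 * dd b p \<gamma> L N) - 1" for N
    using eps_bounds[OF dd0 card_Sh_le] by (simp_all add: eps_def)
  have "(\<lambda>N. exp (real N ^ 2 * dd b p \<gamma> L N) - 1) \<longlonglongrightarrow> exp 0 - 1"
    by (intro tendsto_intros dd_lim p b)
  then have up: "(\<lambda>N. exp (real N ^ 2 * dd b p \<gamma> L N) - 1) \<longlonglongrightarrow> 0" by simp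
  have eps0: "eps \<longlonglongrightarrow> 0"
    by (rule tendsto_sandwich[OF _ _ tendsto_const up]) (use epsb in auto)
  have BBle: "eventually (\<lambda>N. BB b p \<gamma> L N \<le> GG b p \<gamma> L N * eps N) sequentially"
    using eventually_ge_at_top[of 2]
    by eventually_elim (use BB_le p g in \<open>auto simp: eps_def\<close>)
  have "(\<lambda>N. 1 / (1 + eps N)) \<longlonglongrightarrow> 1 / (1 + 0)"
    by (intro tendsto_intros eps0) simp
  then have lo: "(\<lambda>N. 1 / (1 + eps N)) \<longlonglongrightarrow> 1" by simp
  show "(\<lambda>N. tilted_prob b p \<gamma> N (\<lambda>g. g \<in> LL L)) \<longlonglongrightarrow> 1"
    unfolding tilted_eq
  proof (rule tendsto_sandwich[OF _ _ lo tendsto_const])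
    show "eventually (\<lambda>N. 1 / (1 + eps N) \<le> GG b p \<gamma> L N / (GG b p \<gamma> L N + BB b p \<gamma> L N)) sequentially"
      using BBle
    proof eventually_elim
      case (elim N)
      have G: "0 < GG b p \<gamma> L N" by (rule GG_pos)
      have "GG b p \<gamma> L N + BB b p \<gamma> L N \<le> GG b p \<gamma> L N * (1 + eps N)" using elim by (simp add: algebra_simps)
      then show ?case using G BB_nonneg[of b p \<gamma> L N] epsb[of N]
        by (simp add: divide_simps mult.commute)
    qed
    show "eventually (\<lambda>N. GG b p \<gamma> L N / (GG b p \<gamma> L N + BB b p \<gamma> L N) \<le> 1) sequentially"
    proof (intro always_eventually allI)
      fix N
      have "0 < GG b p \<gamma> L N" "0 \<le> BB b p \<gamma> L N" by (rule GG_pos, rule BB_nonneg)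
      then show "GG b p \<gamma> L N / (GG b p \<gamma> L N + BB b p \<gamma> L N) \<le> 1" by (simp add: divide_le_eq)
    qed
  qed
  show "(\<lambda>N. BB b p \<gamma> L N / Zc b p \<gamma> N) \<longlonglongrightarrow> 0"
  proof (rule tendsto_sandwich[OF _ _ tendsto_const eps0])
    show "eventually (\<lambda>N. 0 \<le> BB b p \<gamma> L N / Zc b p \<gamma> N) sequentially"
    proof (intro always_eventually allI)
      fix N
      have "0 < GG b p \<gamma> L N" "0 \<le> BB b p \<gamma> L N" by (rule GG_pos, rule BB_nonneg)
      then show "0 \<le> BB b p \<gamma> L N / Zc b p \<gamma> N" by (simp add: Zc_split[where L = L])
    qed
    show "eventually (\<lambda>N. BB b p \<gamma> L N / Zc b p \<gamma> N \<le> eps N) sequentially"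
      using BBle
    proof eventually_elim
      case (elim N)
      have G: "0 < GG b p \<gamma> L N" by (rule GG_pos)
      have "BB b p \<gamma> L N \<le> (GG b p \<gamma> L N + BB b p \<gamma> L N) * eps N"
        using elim BB_nonneg[of b p \<gamma> L N] epsb[of N] by (smt (verit) mult_right_mono distrib_right)
      then show ?case using G BB_nonneg[of b p \<gamma> L N] by (simp add: Zc_split[where L = L] divide_simps mult.commute)
    qed
  qed
qed



lemma reach_in_range:
  assumes EU: "E \<subseteq> U N" and r: "reach (graph_of N E) n v x"
  shows "x \<in> {1..int N}"
proof -
  from r obtain ps where v: "v \<in> {1..int N}" and ps: "length ps = n + 1" "hd ps = v" "last ps = x"
    "\<forall>i<n. {ps ! i, ps ! (i + 1)} \<in> E"
    unfolding reach_def by auto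
  show ?thesis
  proof (cases n)
    case 0
    then have "reach (graph_of N E) 0 v x" using r by simp
    then have "x = v" by (metis reach_0)
    then show ?thesis using v by simp
  next
    case (Suc k)
    have "ps \<noteq> []" using ps(1) by auto
    then have "last ps = ps ! (k + 1)" using ps(1) Suc by (simp add: last_conv_nth)
    moreover have "{ps ! k, ps ! (k + 1)} \<in> U N" using ps(4) Suc EU by auto
    ultimately show ?thesis using U_memD2[of "ps ! k" "ps ! (k + 1)" N] ps(3) by simp
  qed
qed

lemma ball_verts: "verts (fst (ball (g, v) R)) = {x. \<exists>n\<le>R. reach g n v x}"
  by (simp add: ball_def Let_def verts_def)

lemma ball_big:
  assumes EU: "E \<subseteq> U N" and S: "Sh (real k + 1) N \<subseteq> E" and v: "v \<in> {1..int N}" and Nk: "k + 1 \<le> N"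
  shows "finite (verts (fst (ball (graph_of N E, v) 1)))"
    "k + 1 \<le> card (verts (fst (ball (graph_of N E, v) 1)))"
proof -
  define Bv where "Bv = verts (fst (ball (graph_of N E, v) 1))"
  have Bsub: "Bv \<subseteq> {1..int N}" unfolding Bv_def ball_verts using reach_in_range[OF EU] by blast
  then show fin: "finite (verts (fst (ball (graph_of N E, v) 1)))" unfolding Bv_def
    by (rule finite_subset) simp
  define T where "T = (if v + int k \<le> int N then {v..v + int k} else {int N - int k..int N})"
  have cT: "card T = k + 1" by (simp add: T_def)
  have T: "s \<in> {1..int N} \<and> \<bar>s - v\<bar> \<le> int k" if "s \<in> T" for s
    using that v Nk by (auto simp: T_def split: if_splits)
  have "T \<subseteq> Bv"
  proof
    fix s assume sT: "s \<in> T"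
    note Ts = T[OF sT]
    show "s \<in> Bv"
    proof (cases "s = v")
      case True
      have "reach (graph_of N E) 0 v v" using v by (intro reach_refl) simp
      then have "reach (graph_of N E) 0 v s" using True by simp
      then show ?thesis unfolding Bv_def ball_verts by auto
    next
      case False
      have "{v, s} \<in> E"
      proof (cases "v < s")
        case True
        then have "(v, s) \<in> pairsN N" "real_of_int (s - v) \<le> real k + 1" using Ts v
          by (auto simp: pairsN_def)
        then show ?thesis using S Sh_memI by blast
      next
        case False2: False
        then have "s < v" using False by simp
        then have "(s, v) \<in> pairsN N" "real_of_int (v - s) \<le> real k + 1" using Ts v
          by (auto simp: pairsN_def)
        then have "{s, v} \<in> E" using S Sh_memI by blast
        then show ?thesis by (simp add: insert_commute)
      qed
      then have "reach (graph_of N E) 1 v s" using v by (intro reach_edge) auto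
      then show ?thesis unfolding Bv_def ball_verts by auto
    qed
  qed
  then have "card T \<le> card Bv" using fin unfolding Bv_def by (intro card_mono) auto
  then show "k + 1 \<le> card (verts (fst (ball (graph_of N E, v) 1)))" using cT by (simp add: Bv_def)
qed

lemma iso_card:
  assumes "rg_iso x h"
  shows "card (verts (fst h)) = card (verts (fst x))"
proof -
  let ?t = "\<lambda>z::int. z - snd x + snd h"
  have "inj_on ?t (verts (fst x))" by (rule inj_onI) simp
  moreover have "verts (fst h) = ?t ` verts (fst x)" using assms by (simp add: rg_iso_def Let_def)
  ultimately show ?thesis by (simp add: card_image)
qed

lemma not_iso:
  assumes EU: "E \<subseteq> U N" and S: "Sh (real (card (verts (fst h))) + 1) N \<subseteq> E"
    and v: "v \<in> {1..int N}" and Nk: "card (verts (fst h)) + 1 \<le> N"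
  shows "\<not> rg_iso (ball (graph_of N E, v) 1) h"
proof
  assume "rg_iso (ball (graph_of N E, v) 1) h"
  from iso_card[OF this] ball_big(2)[OF EU S v Nk] show False by simp
qed

lemma rooted_le:
  assumes Nk: "card (verts (fst h)) + 1 \<le> N"
  defines "L \<equiv> real (card (verts (fst h))) + 1"
  shows "0 \<le> rooted_tilted_prob b p \<gamma> N (\<lambda>x. rg_iso (ball x 1) h)"
    "rooted_tilted_prob b p \<gamma> N (\<lambda>x. rg_iso (ball x 1) h) \<le> BB b p \<gamma> L N / Zc b p \<gamma> N"
proof -
  have Zpos: "0 < Zc b p \<gamma> N" using GG_pos[of b p \<gamma> L N] BB_nonneg[of b p \<gamma> L N]
    by (simp add: Zc_split[where L = L])
  have Npos: "0 < real N" using Nk by simp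
  have t0: "0 \<le> tweight b p \<gamma> N E / (Zc b p \<gamma> N * real N)" for E
    using tweight_nonneg Zpos Npos by simp
  show "0 \<le> rooted_tilted_prob b p \<gamma> N (\<lambda>x. rg_iso (ball x 1) h)"
    unfolding rooted_tilted_prob_def using t0 by (intro sum_nonneg) auto
  have inner: "(\<Sum>v\<in>{1..int N}. if rg_iso (ball (graph_of N E, v) 1) h then tweight b p \<gamma> N E / (Zc b p \<gamma> N * real N) else 0)
      \<le> (if Sh L N \<subseteq> E then 0 else tweight b p \<gamma> N E / Zc b p \<gamma> N)" if E: "E \<in> edge_sets N" for E
  proof (cases "Sh L N \<subseteq> E")
    case True
    have "E \<subseteq> U N" using E by (simp add: edge_sets_eq)
    then have "\<not> rg_iso (ball (graph_of N E, v) 1) h" if "v \<in> {1..int N}" for v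
      using not_iso[OF _ _ that Nk] True by (simp add: L_def)
    then show ?thesis using True by simp
  next
    case False
    have "(\<Sum>v\<in>{1..int N}. if rg_iso (ball (graph_of N E, v) 1) h then tweight b p \<gamma> N E / (Zc b p \<gamma> N * real N) else 0)
        \<le> (\<Sum>v\<in>{1..int N}. tweight b p \<gamma> N E / (Zc b p \<gamma> N * real N))"
      using t0 by (intro sum_mono) auto
    also have "\<dots> = real N * (tweight b p \<gamma> N E / (Zc b p \<gamma> N * real N))" by simp
    also have "\<dots> = tweight b p \<gamma> N E / Zc b p \<gamma> N" using Npos by simp
    finally show ?thesis using False by simp
  qed
  have "rooted_tilted_prob b p \<gamma> N (\<lambda>x. rg_iso (ball x 1) h)
      \<le> (\<Sum>E\<in>edge_sets N. if Sh L N \<subseteq> E then 0 else tweight b p \<gamma> N E / Zc b p \<gamma> N)"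
    unfolding rooted_tilted_prob_def by (rule sum_mono) (rule inner)
  also have "\<dots> = (\<Sum>E\<in>edge_sets N. if \<not> Sh L N \<subseteq> E then tweight b p \<gamma> N E / Zc b p \<gamma> N else 0)"
    by (intro sum.cong) auto
  also have "\<dots> = (\<Sum>E\<in>{E\<in>edge_sets N. \<not> Sh L N \<subseteq> E}. tweight b p \<gamma> N E / Zc b p \<gamma> N)"
    by (simp add: sum.inter_filter finite_edge_sets)
  also have "\<dots> = BB b p \<gamma> L N / Zc b p \<gamma> N" unfolding BB_def by (simp add: sum_divide_distrib)
  finally show "rooted_tilted_prob b p \<gamma> N (\<lambda>x. rg_iso (ball x 1) h) \<le> BB b p \<gamma> L N / Zc b p \<gamma> N" .
qed


lemma in_G_finite:
  assumes "finite V" "\<And>e. e \<in> Es \<Longrightarrow> \<exists>x y. x \<noteq> y \<and> x \<in> V \<and> y \<in> V \<and> e = {x, y}"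
  shows "in_G (V, Es)"
proof -
  have "finite {y. {x, y} \<in> Es}" for x
  proof (rule finite_subset[OF _ assms(1)])
    show "{y. {x, y} \<in> Es} \<subseteq> V"
    proof
      fix y assume "y \<in> {y. {x, y} \<in> Es}"
      then obtain a c where "a \<in> V" "c \<in> V" "{x, y} = {a, c}" using assms(2) by blast
      then show "y \<in> V" by (auto simp: doubleton_eq_iff)
    qed
  qed
  then show ?thesis unfolding in_G_def verts_def edges_def using assms(2) by auto
qed

definition nrm :: "rgraph \<Rightarrow> rgraph" where
  "nrm x = (((\<lambda>z. z - snd x) ` verts (fst (ball x 1)),
             (\<lambda>e. (\<lambda>z. z - snd x) ` e) ` edges (fst (ball x 1))), 0)"

definition NF :: "rgraph set" where
  "NF = (\<lambda>(V, Es). ((V, Es), 0::int)) ` ({V::int set. finite V} \<times> {Es. finite Es \<and> Es \<subseteq> {A::int set. finite A}})"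

lemma countable_NF: "countable NF"
  unfolding NF_def
  by (intro countable_image countable_SIGMA countable_Collect_finite countable_Collect_finite_subset)

lemma ball_snd: "snd (ball x R) = snd x"
  by (simp add: ball_def Let_def)

lemma ball_edges: "edges (fst (ball x R)) = {e \<in> edges (fst x). e \<subseteq> verts (fst (ball x R))}"
  by (simp add: ball_def Let_def verts_def edges_def)

lemma nrm_props:
  assumes "rooted_in_G x"
  shows "rooted_in_G (nrm x)" "finite (verts (fst (nrm x)))" "nrm x \<in> NF" "rg_iso (ball x 1) (nrm x)"
proof -
  obtain g r where x: "x = (g, r)" by (cases x)
  have g: "in_G g" and r: "r \<in> verts g" using assms x by (auto simp: rooted_in_G_def)
  define Bv where "Bv = verts (fst (ball x 1))"
  define Be where "Be = edges (fst (ball x 1))"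
  define t where "t = (\<lambda>z::int. z - r)"
  have Bv_eq: "Bv = {y. \<exists>n\<le>1. reach g n r y}" unfolding Bv_def x by (rule ball_verts)
  have Bv_sub: "Bv \<subseteq> insert r {y. {r, y} \<in> edges g}"
  proof
    fix y assume "y \<in> Bv"
    then obtain n where n: "n \<le> 1" "reach g n r y" unfolding Bv_eq by blast
    show "y \<in> insert r {y. {r, y} \<in> edges g}"
    proof (cases "n = 0")
      case True
      then show ?thesis using n reach_0 by fastforce
    next
      case False
      then have "n = 1" using n by simp
      then show ?thesis using n reach_1 by fastforce
    qed
  qed
  have finBv: "finite Bv"
    using g r unfolding in_G_def by (intro finite_subset[OF Bv_sub]) auto
  have rB: "r \<in> Bv" unfolding Bv_eq using reach_refl[OF r] by blast
  have Be_eq: "Be = {e \<in> edges g. e \<subseteq> Bv}" unfolding Be_def Bv_def using ball_edges[of x 1] x by simp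
  have edge_form: "\<exists>a c. a \<noteq> c \<and> a \<in> Bv \<and> c \<in> Bv \<and> e = {a, c}" if "e \<in> Be" for e
  proof -
    from that have e: "e \<in> edges g" "e \<subseteq> Bv" unfolding Be_eq by auto
    then obtain a c where "a \<noteq> c" "e = {a, c}" using g unfolding in_G_def by blast
    then show ?thesis using e by blast
  qed
  have finBe: "finite Be"
    by (rule finite_subset[of _ "Pow Bv"]) (use finBv in \<open>auto simp: Be_eq\<close>)
  have nrm_eq: "nrm x = ((t ` Bv, (\<lambda>e. t ` e) ` Be), 0)"
    unfolding nrm_def Bv_def Be_def t_def x by simp
  have "in_G (t ` Bv, (\<lambda>e. t ` e) ` Be)"
  proof (rule in_G_finite)
    show "finite (t ` Bv)" using finBv by simp
    fix e' assume "e' \<in> (\<lambda>e. t ` e) ` Be"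
    then obtain e where e: "e \<in> Be" "e' = t ` e" by blast
    then obtain a c where "a \<noteq> c" "a \<in> Bv" "c \<in> Bv" "e = {a, c}" using edge_form by blast
    then show "\<exists>x y. x \<noteq> y \<and> x \<in> t ` Bv \<and> y \<in> t ` Bv \<and> e' = {x, y}"
      using e(2) by (intro exI[of _ "t a"] exI[of _ "t c"]) (auto simp: t_def)
  qed
  moreover have "0 \<in> t ` Bv" using rB by (auto simp: t_def intro!: image_eqI[of _ _ r])
  ultimately show "rooted_in_G (nrm x)" unfolding nrm_eq rooted_in_G_def by (simp add: verts_def)
  show "finite (verts (fst (nrm x)))" unfolding nrm_eq using finBv by (simp add: verts_def)
  have "\<forall>e\<in>Be. finite e" using finBv by (auto simp: Be_eq intro: finite_subset)
  then show "nrm x \<in> NF" unfolding nrm_eq NF_def using finBv finBe by auto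
  show "rg_iso (ball x 1) (nrm x)"
    unfolding rg_iso_def Let_def ball_snd nrm_eq
    by (simp add: Bv_def Be_def t_def x verts_def edges_def)
qed

theorem proposition3:
  fixes \<gamma> p b :: real
  assumes "\<gamma> > 1" and "p \<ge> 1" and "b > p + 1"
  shows "(\<forall>L::real. L > 0 \<longrightarrow>
           ((\<lambda>N. tilted_prob b p \<gamma> N (\<lambda>g. g \<in> LL L)) \<longlonglongrightarrow> 1)) \<and>
         \<not> (\<exists>M. random_rooted_graph M \<and> conv_distr (rooted_tilted_prob b p \<gamma>) M)"
proof (intro conjI allI impI notI)
  fix L :: real
  show "(\<lambda>N. tilted_prob b p \<gamma> N (\<lambda>g. g \<in> LL L)) \<longlonglongrightarrow> 1" by (rule core(1)[OF assms])
next
  assume "\<exists>M. random_rooted_graph M \<and> conv_distr (rooted_tilted_prob b p \<gamma>) M"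
  then obtain M where rr: "random_rooted_graph M" and cd: "conv_distr (rooted_tilted_prob b p \<gamma>) M"
    by blast
  have ps: "prob_space M" and sp: "space M \<subseteq> {h. rooted_in_G h}"
    and ms: "\<And>R h. {x \<in> space M. rg_iso (ball x R) h} \<in> sets M"
    using rr unfolding random_rooted_graph_def by auto
  interpret P: prob_space M by (rule ps)
  define A where "A h = {x \<in> space M. rg_iso (ball x 1) h}" for h
  define I where "I = NF \<inter> {h. rooted_in_G h \<and> finite (verts (fst h))}"
  have null: "A h \<in> null_sets M" if hI: "h \<in> I" for h
  proof -
    have hG: "rooted_in_G h" using hI by (simp add: I_def)
    define L where "L = real (card (verts (fst h))) + 1"
    have lim1: "(\<lambda>N. rooted_tilted_prob b p \<gamma> N (\<lambda>x. rg_iso (ball x 1) h)) \<longlonglongrightarrow> measure M (A h)"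
      using cd hG unfolding conv_distr_def A_def by blast
    have lim0: "(\<lambda>N. rooted_tilted_prob b p \<gamma> N (\<lambda>x. rg_iso (ball x 1) h)) \<longlonglongrightarrow> 0"
    proof (rule tendsto_sandwich[OF _ _ tendsto_const core(2)[OF assms, of L]])
      show "eventually (\<lambda>N. 0 \<le> rooted_tilted_prob b p \<gamma> N (\<lambda>x. rg_iso (ball x 1) h)) sequentially"
        using eventually_ge_at_top[of "card (verts (fst h)) + 1"]
        by eventually_elim (rule rooted_le(1))
      show "eventually (\<lambda>N. rooted_tilted_prob b p \<gamma> N (\<lambda>x. rg_iso (ball x 1) h) \<le> BB b p \<gamma> L N / Zc b p \<gamma> N) sequentially"
        using eventually_ge_at_top[of "card (verts (fst h)) + 1"]
        by eventually_elim (unfold L_def, rule rooted_le(2))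
    qed
    have "measure M (A h) = 0" using LIMSEQ_unique[OF lim1 lim0] .
    then have "emeasure M (A h) = 0" using P.emeasure_eq_measure by simp
    then show ?thesis using ms unfolding A_def by blast
  qed
  have cover: "space M \<subseteq> (\<Union>h\<in>I. A h)"
  proof
    fix x assume x: "x \<in> space M"
    then have "rooted_in_G x" using sp by blast
    note np = nrm_props[OF this]
    then have "nrm x \<in> I" by (simp add: I_def)
    moreover have "x \<in> A (nrm x)" using x np(4) by (simp add: A_def)
    ultimately show "x \<in> (\<Union>h\<in>I. A h)" by blast
  qed
  have "countable I" using countable_NF by (rule countable_subset[rotated]) (simp add: I_def)
  then have "(\<Union>h\<in>I. A h) \<in> null_sets M" using null by (rule null_sets_UN')
  then have "space M \<in> null_sets M" by (rule null_sets_subset[OF _ sets.top cover])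
  then have "emeasure M (space M) = 0" by blast
  then show False using P.emeasure_space_1 by simp
qed

end
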